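(* Consider the FlexPD-C iterates described in the context with $\beta>0$, integer $T\ge1$ and $0<\alpha<1/\rho(B)$, and let $C=\sum_{t=0}^{T-1}(I-\alpha B)^t$, $M=C^{-1}(I-\alpha B)^T$, $N=\frac{1}{\alpha}(C^{-1}-M)$. Then for any $\eta_4>0$ and every $k\ge0$, \[\|x^{k+1}-x^*\|_{P_C}^2+\|x^{k+1}-x^k\|_{Q_C}^2\le\|x^k-x^*\|_M^2-\|x^{k+1}-x^*\|_M^2+\frac{\alpha}{\beta}\Big(\|\lambda^k-\lambda^*\|^2-\|\lambda^{k+1}-\lambda^*\|^2\Big),\] where $P_C=2\alpha mI-\alpha\eta_4I+2\alpha N-\alpha\beta A'A$ and $Q_C=M-\frac{\alpha L^2}{\eta_4}I$.
   Context: Setting: $n$ agents are connected by a connected undirected graph with edge set $\mathcal E$, $\epsilon=|\mathcal E|$. For $x\in\mathbb R^n$ let $f(x)=\sum_{i=1}^n f_i(x_i)$, where each $f_i:\mathbb R\to\mathbb R$ is twice differentiable with $m\le f_i''\le L$ for constants $0<m\le L$; $\nabla f(x)=(f_1'(x_1),\dots,f_n'(x_n))'$. $A\in\mathbb R^{\epsilon\times n}$ is the edge–node incidence matrix (null space spanned by the all-ones vector). $B\in\mathbb R^{n\times n}$ is symmetric positive semidefinite with the same null space as $A$, off-diagonal entries nonzero only on edges; $\rho(B)$ is its largest eigenvalue. $x^*$ is the unique minimizer of $f$ subject to $Ax=0$ and $\lambda^*$ a Lagrange multiplier with $\nabla f(x^* )+A'\lambda^*=0$, $Ax^*=0$, $Bx^*=0$,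 chosen in the column space of $A$. FlexPD-C: given $\alpha,\beta>0$, $T\ge1$, $x^0$ arbitrary, $\lambda^0=0$; for $k\ge0$: $x^{k+1,0}=x^k$; for $t=1,\dots,T$, $x^{k+1,t}=x^{k+1,t-1}-\alpha\nabla f(x^k)-\alpha A'\lambda^k-\alpha Bx^{k+1,t-1}$; then $x^{k+1}=x^{k+1,T}$, $\lambda^{k+1}=\lambda^k+\beta Ax^{k+1}$. Notation: $\|v\|_S^2:=v'Sv$ for any symmetric $S$; $\|\cdot\|$ Euclidean norm. *)

theory Defs
  imports "HOL-Analysis.Analysis"
begin

text \<open>Matrix power (note: the ring power on vec is componentwise, so we define our own).\<close>
definition matpow :: "real^'n^'n \<Rightarrow> nat \<Rightarrow> real^'n^'n" where
  "matpow S t = ((\<lambda>Z. S ** Z) ^^ t) (mat 1)"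

definition sqnorm :: "real^'n^'n \<Rightarrow> real^'n \<Rightarrow> real" where
  "sqnorm S v = v \<bullet> (S *v v)"

definition largest_eig :: "real^'n^'n \<Rightarrow> real" where
  "largest_eig S = Max {l. \<exists>v. v \<noteq> 0 \<and> S *v v = l *\<^sub>R v}"

text \<open>Edge-node incidence matrix of a graph whose edges (indexed by type 'e) have
  endpoints src e and dst e (orientation arbitrary).\<close>
definition incidence :: "('e \<Rightarrow> 'n) \<Rightarrow> ('e \<Rightarrow> 'n) \<Rightarrow> real^'n^'e" where
  "incidence src dst = (\<chi> e i. if i = src e then 1 else if i = dst e then -1 else 0)"

definition adjacent :: "('e \<Rightarrow> 'n) \<Rightarrow> ('e \<Rightarrow> 'n) \<Rightarrow> 'n \<Rightarrow> 'n \<Rightarrow> bool" where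
  "adjacent src dst i j \<longleftrightarrow> (\<exists>e. (src e = i \<and> dst e = j) \<or> (src e = j \<and> dst e = i))"

definition simple_graph :: "('e \<Rightarrow> 'n) \<Rightarrow> ('e \<Rightarrow> 'n) \<Rightarrow> bool" where
  "simple_graph src dst \<longleftrightarrow> (\<forall>e. src e \<noteq> dst e) \<and>
     (\<forall>e e'. {src e, dst e} = {src e', dst e'} \<longrightarrow> e = e')"

definition connected_graph :: "('e \<Rightarrow> 'n) \<Rightarrow> ('e \<Rightarrow> 'n) \<Rightarrow> bool" where
  "connected_graph src dst \<longleftrightarrow> (\<forall>i j. (adjacent src dst)\<^sup>*\<^sup>* i j)"

definition grad :: "('n \<Rightarrow> real \<Rightarrow> real) \<Rightarrow> real^'n \<Rightarrow> real^'n" where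
  "grad f' x = (\<chi> i. f' i (x $ i))"

fun flexpd :: "(real^'n \<Rightarrow> real^'n) \<Rightarrow> real^'n^'e \<Rightarrow> real^'n^'n \<Rightarrow> real \<Rightarrow> real \<Rightarrow> nat
    \<Rightarrow> real^'n \<Rightarrow> nat \<Rightarrow> (real^'n) \<times> (real^'e)" where
  "flexpd g A B \<alpha> \<beta> T x0 0 = (x0, 0)"
| "flexpd g A B \<alpha> \<beta> T x0 (Suc k) =
     (let (x, l) = flexpd g A B \<alpha> \<beta> T x0 k;
          x' = ((\<lambda>z. z - \<alpha> *\<^sub>R g x - \<alpha> *\<^sub>R (transpose A *v l) - \<alpha> *\<^sub>R (B *v z)) ^^ T) x
      in (x', l + \<beta> *\<^sub>R (A *v x')))"

end

theory Submission
  imports Defs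
begin


lemma matpow_0[simp]: "matpow S 0 = mat 1" by (simp add: matpow_def)
lemma matpow_Suc: "matpow S (Suc t) = S ** matpow S t" by (simp add: matpow_def)

lemma matpow_add: "matpow S (a + b) = matpow S a ** matpow S b"
  by (induction a) (simp_all add: matpow_Suc matrix_mul_assoc)

lemma matpow_comm: "matpow S a ** matpow S b = matpow S b ** matpow S a"
  by (metis matpow_add add.commute)

lemma matpow_comm1: "S ** matpow S b = matpow S b ** S"
  using matpow_comm[of S 1 b] by (simp add: matpow_Suc)

lemma transpose_add': "transpose (X + Y) = transpose X + transpose (Y::real^'n^'m)"
  by (simp add: transpose_def vec_eq_iff)

lemma transpose_diff': "transpose (X - Y) = transpose X - transpose (Y::real^'n^'m)"
  by (simp add: transpose_def vec_eq_iff)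

lemma transpose_sum': "finite F \<Longrightarrow> transpose (\<Sum>t\<in>F. G t) = (\<Sum>t\<in>F. transpose (G t :: real^'n^'m))"
  by (induction F rule: finite_induct) (simp_all add: transpose_add' transpose_def vec_eq_iff)

lemma matrix_add_rdistrib': "(X + Y) ** Z = X ** Z + Y ** (Z::real^'n^'m)"
  by (simp add: matrix_matrix_mult_def vec_eq_iff sum.distrib distrib_right)

lemma sum_matrix_mult: "finite F \<Longrightarrow> (\<Sum>t\<in>F. G t) ** (Z::real^'n^'m) = (\<Sum>t\<in>F. G t ** Z)"
  by (induction F rule: finite_induct) (simp_all add: matrix_add_rdistrib')

lemma matrix_sum_mult: "finite F \<Longrightarrow> (Z::real^'n^'m) ** (\<Sum>t\<in>F. G t) = (\<Sum>t\<in>F. Z ** G t)"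
  by (induction F rule: finite_induct) (simp_all add: matrix_add_ldistrib)

lemma sum_matrix_vector: "finite F \<Longrightarrow> (\<Sum>t\<in>F. G t) *v (v::real^'n) = (\<Sum>t\<in>F. G t *v v)"
  by (induction F rule: finite_induct) (simp_all add: matrix_vector_mult_add_rdistrib)

lemma transpose_matpow: "transpose S = S \<Longrightarrow> transpose (matpow S t) = matpow S t"
  by (induction t) (simp_all add: matpow_Suc matrix_transpose_mul matpow_comm1)

lemma sym_inner: "transpose S = S \<Longrightarrow> x \<bullet> (S *v y) = (S *v x) \<bullet> (y::real^'n)"
  by (metis dot_lmul_matrix transpose_matrix_vector)


lemma eig_finite:
  fixes B :: "real^'n^'n"
  assumes sym: "transpose B = B"
  shows "finite {l. \<exists>v. v \<noteq> 0 \<and> B *v v = l *\<^sub>R v}"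
proof -
  define E where "E = {l. \<exists>v. v \<noteq> 0 \<and> B *v v = l *\<^sub>R v}"
  define ev where "ev l = (SOME v. v \<noteq> 0 \<and> B *v v = l *\<^sub>R v)" for l
  have ev: "ev l \<noteq> 0 \<and> B *v ev l = l *\<^sub>R ev l" if "l \<in> E" for l
    using that unfolding E_def ev_def by (metis (mono_tags, lifting) mem_Collect_eq someI_ex)
  have inj: "inj_on ev E"
  proof (rule inj_onI)
    fix a b assume a: "a \<in> E" and b: "b \<in> E" and eq: "ev a = ev b"
    have "a *\<^sub>R ev a = b *\<^sub>R ev a" using ev[OF a] ev[OF b] eq by metis
    then have "(a - b) *\<^sub>R ev a = 0" by (simp add: algebra_simps)
    then show "a = b" using ev[OF a] by simp
  qed
  have orth: "pairwise orthogonal (ev ` E)"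
  proof (clarsimp simp: pairwise_def)
    fix a b assume a: "a \<in> E" and b: "b \<in> E" and ne: "ev a \<noteq> ev b"
    have "a \<noteq> b" using ne by auto
    have "ev a \<bullet> (B *v ev b) = (B *v ev a) \<bullet> ev b" by (rule sym_inner[OF sym])
    then have "b * (ev a \<bullet> ev b) = a * (ev a \<bullet> ev b)" using ev[OF a] ev[OF b] by simp
    then have "ev a \<bullet> ev b = 0" using \<open>a \<noteq> b\<close> by auto
    then show "orthogonal (ev a) (ev b)" unfolding orthogonal_def by simp
  qed
  have "0 \<notin> ev ` E" using ev by auto
  then have "independent (ev ` E)" using orth pairwise_orthogonal_independent by blast
  then have "finite (ev ` E)" using independent_bound by blast
  then show ?thesis using inj finite_imageD E_def by blast
qed

lemma quad_zero:
  fixes a c :: real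
  assumes "\<And>t. 2 * t * a + t\<^sup>2 * c \<le> 0"
  shows "a = 0"
proof (rule ccontr)
  assume "a \<noteq> 0"
  define k where "k = \<bar>c\<bar> + 1"
  have pos: "k > 0" by (simp add: k_def)
  define t where "t = a / k"
  have "t\<^sup>2 * (- \<bar>c\<bar>) \<le> t\<^sup>2 * c" by (rule mult_left_mono) auto
  then have h1: "2 * t * a + t\<^sup>2 * c \<ge> 2 * t * a - t\<^sup>2 * (k - 1)" by (simp add: k_def)
  have h2: "2 * t * a - t\<^sup>2 * (k - 1) = a\<^sup>2 * (k + 1) / k\<^sup>2"
    unfolding t_def using pos by (simp add: field_simps power2_eq_square)
  have h3: "a\<^sup>2 * (k + 1) / k\<^sup>2 > 0" using \<open>a \<noteq> 0\<close> pos by (simp add: zero_less_divide_iff)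
  show False using assms[of t] h1 h2 h3 by linarith
qed



lemma rayleigh:
  fixes B :: "real^'n^'n"
  assumes sym: "transpose B = B"
  shows "u \<bullet> (B *v u) \<le> largest_eig B * (u \<bullet> u)"
proof -
  define q where "q u = u \<bullet> (B *v u)" for u :: "real^'n"
  have cont: "continuous_on (sphere 0 1) q"
    unfolding q_def by (intro continuous_intros linear_continuous_on matrix_vector_mul_linear bounded_linear_intros)
  obtain i :: 'n where True by blast
  have "axis i 1 \<in> sphere (0::real^'n) 1" by simp
  then have ne: "sphere (0::real^'n) 1 \<noteq> {}" by blast
  obtain u0 where u0: "u0 \<in> sphere 0 1" and mx: "\<And>y. y \<in> sphere 0 1 \<Longrightarrow> q y \<le> q u0"
    using continuous_attains_sup[OF compact_sphere ne cont] by blast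
  define \<mu> where "\<mu> = q u0"
  have u0n: "u0 \<bullet> u0 = 1" using u0 by (simp add: dot_square_norm)
  have gen: "q u \<le> \<mu> * (u \<bullet> u)" for u
  proof (cases "u = 0")
    case True then show ?thesis by (simp add: q_def)
  next
    case False
    define w where "w = (1 / norm u) *\<^sub>R u"
    have "w \<in> sphere 0 1" using False by (simp add: w_def)
    then have "q w \<le> \<mu>" using mx \<mu>_def by simp
    moreover have "q w = q u / (norm u)\<^sup>2"
      by (simp add: q_def w_def matrix_vector_mult_scaleR power2_eq_square)
    moreover have "(norm u)\<^sup>2 = u \<bullet> u" by (simp add: power2_norm_eq_inner)
    moreover have "(norm u)\<^sup>2 > 0" using False by simp
    ultimately show ?thesis by (simp add: divide_le_eq mult.commute)
  qed
  define r where "r = B *v u0 - \<mu> *\<^sub>R u0"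
  have "w \<bullet> r = 0" for w
  proof (rule quad_zero[where c = "q w - \<mu> * (w \<bullet> w)"])
    fix t :: real
    have "q (u0 + t *\<^sub>R w) \<le> \<mu> * ((u0 + t *\<^sub>R w) \<bullet> (u0 + t *\<^sub>R w))" by (rule gen)
    moreover have "q (u0 + t *\<^sub>R w) = q u0 + 2 * t * (w \<bullet> (B *v u0)) + t\<^sup>2 * q w"
      using sym_inner[OF sym, of u0 w]
      by (simp add: q_def algebra_simps matrix_vector_mult_scaleR inner_commute power2_eq_square)
    moreover have "(u0 + t *\<^sub>R w) \<bullet> (u0 + t *\<^sub>R w) = 1 + 2 * t * (w \<bullet> u0) + t\<^sup>2 * (w \<bullet> w)"
    proof -
      have "(u0 + t *\<^sub>R w) \<bullet> (u0 + t *\<^sub>R w) = u0 \<bullet> u0 + 2 * t * (w \<bullet> u0) + t\<^sup>2 * (w \<bullet> w)"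
        by (simp add: inner_add_left inner_add_right inner_commute[of u0 w] power2_eq_square algebra_simps)
      then show ?thesis using u0n by simp
    qed
    moreover have "w \<bullet> r = w \<bullet> (B *v u0) - \<mu> * (w \<bullet> u0)" by (simp add: r_def inner_diff_right)
    ultimately have h: "\<mu> + 2 * t * (w \<bullet> (B *v u0)) + t\<^sup>2 * q w \<le> \<mu> * (1 + 2 * t * (w \<bullet> u0) + t\<^sup>2 * (w \<bullet> w))"
      and hr: "w \<bullet> (B *v u0) = w \<bullet> r + \<mu> * (w \<bullet> u0)" unfolding \<mu>_def by auto
    have "2 * t * (w \<bullet> r) + t\<^sup>2 * (q w - \<mu> * (w \<bullet> w)) = 
      (\<mu> + 2 * t * (w \<bullet> (B *v u0)) + t\<^sup>2 * q w) - \<mu> * (1 + 2 * t * (w \<bullet> u0) + t\<^sup>2 * (w \<bullet> w))"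
      unfolding hr by (simp add: algebra_simps)
    then show "2 * t * (w \<bullet> r) + t\<^sup>2 * (q w - \<mu> * (w \<bullet> w)) \<le> 0" using h by linarith
  qed
  then have "r \<bullet> r = 0" by blast
  then have "r = 0" by simp
  then have eig: "B *v u0 = \<mu> *\<^sub>R u0" by (simp add: r_def)
  have "u0 \<noteq> 0" using u0 by auto
  then have "\<mu> \<in> {l. \<exists>v. v \<noteq> 0 \<and> B *v v = l *\<^sub>R v}" using eig by blast
  then have "\<mu> \<le> largest_eig B" unfolding largest_eig_def using eig_finite[OF sym] by simp
  moreover have "u \<bullet> u \<ge> 0" by simp
  ultimately have "\<mu> * (u \<bullet> u) \<le> largest_eig B * (u \<bullet> u)" by (simp add: mult_right_mono)
  then show ?thesis using gen[of u] q_def by simp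
qed




lemma psd_matpow:
  fixes W :: "real^'n^'n"
  assumes sym: "transpose W = W" and psd: "\<And>v. 0 \<le> v \<bullet> (W *v v)"
  shows "0 \<le> v \<bullet> (matpow W t *v v)"
proof (cases "even t")
  case True
  then obtain s where t: "t = s + s" by (metis evenE mult_2)
  define Q where "Q = matpow W s"
  have "v \<bullet> (matpow W t *v v) = v \<bullet> (Q *v (Q *v v))"
    by (simp add: t matpow_add Q_def matrix_vector_mul_assoc)
  also have "\<dots> = (Q *v v) \<bullet> (Q *v v)"
    using sym_inner[OF transpose_matpow[OF sym, of s]] Q_def by simp
  finally show ?thesis by simp
next
  case False
  then obtain s where t: "t = s + (1 + s)" by (metis oddE add.commute add.left_commute mult_2)
  define Q where "Q = matpow W s"
  have "matpow W t = Q ** (W ** Q)"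
    unfolding t Q_def by (simp only: matpow_add) (simp add: matpow_Suc)
  then have "v \<bullet> (matpow W t *v v) = v \<bullet> (Q *v (W *v (Q *v v)))"
    by (simp add: matrix_vector_mul_assoc)
  also have "\<dots> = (Q *v v) \<bullet> (W *v (Q *v v))"
    using sym_inner[OF transpose_matpow[OF sym, of s]] Q_def by simp
  finally show ?thesis using psd by simp
qed

lemma C_pos:
  fixes W :: "real^'n^'n"
  assumes sym: "transpose W = W" and psd: "\<And>v. 0 \<le> v \<bullet> (W *v v)" and T: "T \<ge> 1"
  shows "v \<bullet> v \<le> v \<bullet> ((\<Sum>t<T. matpow W t) *v v)"
proof -
  obtain T' where T': "T = Suc T'" using T by (cases T) auto
  have "v \<bullet> ((\<Sum>t<T. matpow W t) *v v) = (\<Sum>t<T. v \<bullet> (matpow W t *v v))"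
    by (simp add: sum_matrix_vector inner_sum_right)
  also have "\<dots> = v \<bullet> v + (\<Sum>t<T'. v \<bullet> (matpow W (Suc t) *v v))"
    unfolding T' sum.lessThan_Suc_shift by simp
  also have "\<dots> \<ge> v \<bullet> v"
    using psd_matpow[OF sym psd] by (simp add: sum_nonneg)
  finally show ?thesis .
qed

lemma iter_closed:
  fixes B :: "real^'n^'n"
  assumes W: "W = mat 1 - \<alpha> *\<^sub>R B"
  shows "((\<lambda>z. z - \<alpha> *\<^sub>R g - \<alpha> *\<^sub>R h - \<alpha> *\<^sub>R (B *v z)) ^^ t) x
         = matpow W t *v x - \<alpha> *\<^sub>R (\<Sum>s<t. matpow W s *v (g + h))"
proof (induction t)
  case 0 then show ?case by simp
next
  case (Suc t)
  have Wz: "W *v z = z - \<alpha> *\<^sub>R (B *v z)" for z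
    by (simp add: W matrix_vector_mult_diff_rdistrib scaleR_matrix_vector_assoc)
  define F where "F = (\<lambda>z. z - \<alpha> *\<^sub>R g - \<alpha> *\<^sub>R h - \<alpha> *\<^sub>R (B *v z))"
  have Fz: "F z = W *v z - \<alpha> *\<^sub>R (g + h)" for z
    unfolding F_def Wz by (simp add: algebra_simps)
  have "(F ^^ Suc t) x = F ((F ^^ t) x)" by simp
  also have "\<dots> = W *v ((F ^^ t) x) - \<alpha> *\<^sub>R (g + h)" by (rule Fz)
  also have "\<dots> = W *v (matpow W t *v x - \<alpha> *\<^sub>R (\<Sum>s<t. matpow W s *v (g + h))) - \<alpha> *\<^sub>R (g + h)"
    using Suc.IH unfolding F_def by simp
  finally have "((\<lambda>z. z - \<alpha> *\<^sub>R g - \<alpha> *\<^sub>R h - \<alpha> *\<^sub>R (B *v z)) ^^ Suc t) x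
       = W *v (matpow W t *v x - \<alpha> *\<^sub>R (\<Sum>s<t. matpow W s *v (g + h))) - \<alpha> *\<^sub>R (g + h)"
    unfolding F_def .
  also have "\<dots> = matpow W (Suc t) *v x - \<alpha> *\<^sub>R ((\<Sum>s<t. matpow W (Suc s) *v (g + h)) + (g + h))"
    by (simp add: matrix_vector_mult_diff_distrib matrix_vector_mult_scaleR vec.sum
        matrix_vector_mul_assoc matpow_Suc algebra_simps)
  also have "\<dots> = matpow W (Suc t) *v x - \<alpha> *\<^sub>R (\<Sum>s<Suc t. matpow W s *v (g + h))"
    unfolding sum.lessThan_Suc_shift by (simp add: add.commute)
  finally show ?case .
qed

lemma mono_deriv_bounds:
  fixes F F' :: "real \<Rightarrow> real"
  assumes d: "\<And>y. (F has_real_derivative F' y) (at y)"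
    and lo: "\<And>y. m \<le> F' y" and hi: "\<And>y. F' y \<le> L" and m: "0 \<le> m"
  shows "m * (a - b)\<^sup>2 \<le> (F a - F b) * (a - b) \<and> (F a - F b)\<^sup>2 \<le> L\<^sup>2 * (a - b)\<^sup>2"
proof -
  have key: "m * (a - b)\<^sup>2 \<le> (F a - F b) * (a - b) \<and> (F a - F b)\<^sup>2 \<le> L\<^sup>2 * (a - b)\<^sup>2"
    if ab: "b < a" for a b
  proof -
    obtain z where z: "F a - F b = (a - b) * F' z" using MVT2[OF ab, of F F'] d by blast
    have f0: "0 \<le> F' z" using lo[of z] m by linarith
    have "m * (a - b)\<^sup>2 \<le> F' z * (a - b)\<^sup>2" using lo[of z] by (simp add: mult_right_mono)
    moreover have "(F' z)\<^sup>2 \<le> L\<^sup>2" using f0 hi[of z] by (simp add: power_mono)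
    then have "(F' z)\<^sup>2 * (a - b)\<^sup>2 \<le> L\<^sup>2 * (a - b)\<^sup>2" by (simp add: mult_right_mono)
    ultimately show ?thesis unfolding z by (simp add: power2_eq_square algebra_simps)
  qed
  consider "b < a" | "a = b" | "a < b" by linarith
  then show ?thesis
  proof cases
    case 1 then show ?thesis using key by blast
  next
    case 2 then show ?thesis by simp
  next
    case 3
    have "(F a - F b) * (a - b) = (F b - F a) * (b - a)" "(F a - F b)\<^sup>2 = (F b - F a)\<^sup>2"
      "(a - b)\<^sup>2 = (b - a)\<^sup>2" by (simp_all add: algebra_simps power2_eq_square)
    then show ?thesis using key[OF 3] by simp
  qed
qed

lemma grad_bounds:
  fixes f' f'' :: "'n::finite \<Rightarrow> real \<Rightarrow> real"
  assumes d: "\<And>i y. (f' i has_real_derivative f'' i y) (at y)"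
    and lo: "\<And>i y. m \<le> f'' i y" and hi: "\<And>i y. f'' i y \<le> L" and m: "0 \<le> m"
  shows "m * ((u - w) \<bullet> (u - w)) \<le> (grad f' u - grad f' w) \<bullet> (u - w)"
    and "(grad f' u - grad f' w) \<bullet> (grad f' u - grad f' w) \<le> L\<^sup>2 * ((u - w) \<bullet> (u - w))"
proof -
  have c: "m * (u$i - w$i)\<^sup>2 \<le> (f' i (u$i) - f' i (w$i)) * (u$i - w$i) \<and>
        (f' i (u$i) - f' i (w$i))\<^sup>2 \<le> L\<^sup>2 * (u$i - w$i)\<^sup>2" for i
    by (rule mono_deriv_bounds[OF d lo hi m])
  show "m * ((u - w) \<bullet> (u - w)) \<le> (grad f' u - grad f' w) \<bullet> (u - w)"
    unfolding inner_vec_def grad_def sum_distrib_left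
    using c by (intro sum_mono) (simp add: power2_eq_square)
  show "(grad f' u - grad f' w) \<bullet> (grad f' u - grad f' w) \<le> L\<^sup>2 * ((u - w) \<bullet> (u - w))"
    unfolding inner_vec_def grad_def sum_distrib_left
    using c by (intro sum_mono) (simp add: power2_eq_square)
qed



lemma final_arith:
  fixes \<alpha> \<beta> \<eta> m L S1 eMd eMe dMd ekMek ee dd AA pp qq Ap eg eg1 eg01 GG :: real
  assumes "S1 + eMd = -\<alpha>*eg - \<alpha>*Ap"
  "ekMek = eMe - 2*eMd + dMd"
  "(\<alpha>/\<beta>)*(pp - qq) = -2*\<alpha>*Ap - \<alpha>*\<beta>*AA"
  "eg = eg1 + eg01"
  "\<alpha>*m*ee \<le> \<alpha>*eg1"
  "-2*\<alpha>*eg01 \<le> \<alpha>*\<eta>*ee + \<alpha>*GG/\<eta>"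
  "\<alpha>*GG/\<eta> \<le> \<alpha>*L\<^sup>2/\<eta>*dd"
 shows "(2*\<alpha>*m - \<alpha>*\<eta>)*ee + 2*S1 - \<alpha>*\<beta>*AA + (dMd - \<alpha>*L\<^sup>2/\<eta>*dd) \<le> ekMek - eMe + (\<alpha>/\<beta>)*(pp - qq)"
  using assms by (simp add: algebra_simps)

theorem lemma3p16:
  fixes src dst :: "'e::finite \<Rightarrow> 'n::finite"
    and f f' f'' :: "'n \<Rightarrow> real \<Rightarrow> real"
    and m L :: real
    and B :: "real^'n^'n"
    and xs :: "real^'n" and ls :: "real^'e"
    and \<alpha> \<beta> \<eta>4 :: real and T :: nat and x0 :: "real^'n"
  assumes graph: "simple_graph src dst" "connected_graph src dst"
    and deriv1: "\<And>i y. (f i has_real_derivative f' i y) (at y)"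
    and deriv2: "\<And>i y. (f' i has_real_derivative f'' i y) (at y)"
    and bounds: "0 < m" "m \<le> L" "\<And>i y. m \<le> f'' i y" "\<And>i y. f'' i y \<le> L"
    and B_sym: "transpose B = B"
    and B_psd: "\<And>v. 0 \<le> v \<bullet> (B *v v)"
    and B_null: "\<And>v. B *v v = 0 \<longleftrightarrow> incidence src dst *v v = 0"
    and B_sparse: "\<And>i j. i \<noteq> j \<Longrightarrow> B $ i $ j \<noteq> 0 \<Longrightarrow> adjacent src dst i j"
    and xs_feas: "incidence src dst *v xs = 0"
    and xs_min: "\<And>x. incidence src dst *v x = 0 \<Longrightarrow>
                   (\<Sum>i\<in>UNIV. f i (xs $ i)) \<le> (\<Sum>i\<in>UNIV. f i (x $ i))"
    and KKT: "grad f' xs + transpose (incidence src dst) *v ls = 0"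
    and Bxs: "B *v xs = 0"
    and ls_range: "ls \<in> range (\<lambda>y. incidence src dst *v y)"
    and params: "\<beta> > 0" "T \<ge> 1" "\<alpha> > 0" "\<alpha> * largest_eig B < 1" "\<eta>4 > 0"
  shows
    "let A = incidence src dst;
         I = (mat 1 :: real^'n^'n);
         C = (\<Sum>t<T. matpow (I - \<alpha> *\<^sub>R B) t);
         M = matrix_inv C ** matpow (I - \<alpha> *\<^sub>R B) T;
         N = (1 / \<alpha>) *\<^sub>R (matrix_inv C - M);
         PC = (2 * \<alpha> * m) *\<^sub>R I - (\<alpha> * \<eta>4) *\<^sub>R I + (2 * \<alpha>) *\<^sub>R N
                - (\<alpha> * \<beta>) *\<^sub>R (transpose A ** A);
         QC = M - (\<alpha> * L\<^sup>2 / \<eta>4) *\<^sub>R I;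
         it = flexpd (grad f') A B \<alpha> \<beta> T x0;
         x = (\<lambda>k. fst (it k));
         l = (\<lambda>k. snd (it k))
     in \<forall>k. sqnorm PC (x (Suc k) - xs) + sqnorm QC (x (Suc k) - x k)
            \<le> sqnorm M (x k - xs) - sqnorm M (x (Suc k) - xs)
              + (\<alpha> / \<beta>) * ((norm (l k - ls))\<^sup>2 - (norm (l (Suc k) - ls))\<^sup>2)"
proof -
  define A where "A = incidence src dst"
  define I where "I = (mat 1 :: real^'n^'n)"
  define W where "W = I - \<alpha> *\<^sub>R B"
  define C where "C = (\<Sum>t<T. matpow W t)"
  define Ci where "Ci = matrix_inv C"
  define P where "P = matpow W T"
  define M where "M = Ci ** P"
  define N where "N = (1 / \<alpha>) *\<^sub>R (Ci - M)"
  define PC where "PC = (2 * \<alpha> * m) *\<^sub>R I - (\<alpha> * \<eta>4) *\<^sub>R I + (2 * \<alpha>) *\<^sub>R N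
                - (\<alpha> * \<beta>) *\<^sub>R (transpose A ** A)"
  define QC where "QC = M - (\<alpha> * L\<^sup>2 / \<eta>4) *\<^sub>R I"
  define it where "it = flexpd (grad f') A B \<alpha> \<beta> T x0"
  have apos: "\<alpha> > 0" and bpos: "\<beta> > 0" and epos: "\<eta>4 > 0" using params by auto
  have W': "W = mat 1 - \<alpha> *\<^sub>R B" by (simp add: W_def I_def)
  have Wsym: "transpose W = W" unfolding W' by (simp add: transpose_diff' transpose_scalar B_sym)
  have Wv: "W *v v = v - \<alpha> *\<^sub>R (B *v v)" for v
    unfolding W' by (simp add: matrix_vector_mult_diff_rdistrib scaleR_matrix_vector_assoc)
  have Wpsd: "0 \<le> v \<bullet> (W *v v)" for v
  proof -
    have e1: "v \<bullet> (W *v v) = v \<bullet> v - \<alpha> * (v \<bullet> (B *v v))"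
      by (simp add: Wv inner_diff_right)
    have e2: "\<alpha> * (v \<bullet> (B *v v)) \<le> \<alpha> * (largest_eig B * (v \<bullet> v))"
      using rayleigh[OF B_sym, of v] apos by (simp add: mult_left_mono)
    have "\<alpha> * largest_eig B * (v \<bullet> v) \<le> 1 * (v \<bullet> v)"
      using params(4) by (intro mult_right_mono) auto
    then have e3: "\<alpha> * (largest_eig B * (v \<bullet> v)) \<le> v \<bullet> v" by (simp add: mult.assoc)
    show ?thesis using e1 e2 e3 by linarith
  qed
  have Csym: "transpose C = C"
    unfolding C_def by (simp add: transpose_sum' transpose_matpow[OF Wsym])
  have Cinj: "v = 0" if "C *v v = 0" for v
  proof -
    have "v \<bullet> v \<le> v \<bullet> (C *v v)" using C_pos[OF Wsym Wpsd params(2), of v] by (simp add: C_def)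
    then have "v \<bullet> v \<le> 0" using that by simp
    then show ?thesis by (metis inner_ge_zero inner_eq_zero_iff order_antisym)
  qed
  have "\<exists>D. D ** C = mat 1" using matrix_left_invertible_ker Cinj by blast
  then have "invertible C" using invertible_left_inverse by blast
  then have CC: "C ** Ci = mat 1 \<and> Ci ** C = mat 1"
    unfolding Ci_def matrix_inv_def invertible_def by (rule someI_ex)
  then have CCi: "C ** Ci = mat 1" and CiC: "Ci ** C = mat 1" by auto
  have Cisym: "transpose Ci = Ci"
  proof -
    have "transpose (Ci ** C) = mat 1" using CiC by simp
    then have "C ** transpose Ci = mat 1" by (simp add: matrix_transpose_mul Csym)
    then have "Ci ** (C ** transpose Ci) = Ci" by simp
    then show ?thesis using CiC by (simp add: matrix_mul_assoc)
  qed
  have CP: "C ** P = P ** C"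
  proof -
    have "C ** P = (\<Sum>t<T. matpow W t ** P)" by (simp add: C_def sum_matrix_mult)
    also have "\<dots> = (\<Sum>t<T. P ** matpow W t)" unfolding P_def by (intro sum.cong refl) (rule matpow_comm)
    also have "\<dots> = P ** C" by (simp add: C_def matrix_sum_mult)
    finally show ?thesis .
  qed
  have CiP: "Ci ** P = P ** Ci"
  proof -
    have "Ci ** P = (Ci ** P) ** (C ** Ci)" by (simp add: CCi)
    also have "\<dots> = Ci ** ((P ** C) ** Ci)" by (simp only: matrix_mul_assoc)
    also have "\<dots> = Ci ** ((C ** P) ** Ci)" by (simp only: CP)
    also have "\<dots> = (Ci ** C) ** (P ** Ci)" by (simp only: matrix_mul_assoc)
    also have "\<dots> = P ** Ci" by (simp add: CiC)
    finally show ?thesis .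
  qed
  have Psym: "transpose P = P" unfolding P_def by (rule transpose_matpow[OF Wsym])
  have Msym: "transpose M = M"
    unfolding M_def by (simp add: matrix_transpose_mul Cisym Psym CiP)
  have Wxs: "W *v xs = xs" by (simp add: Wv Bxs)
  have Ptxs: "matpow W t *v xs = xs" for t
    by (induction t) (simp_all add: matpow_Suc matrix_vector_mul_assoc[symmetric] Wxs)
  have Nxs: "Ci *v xs = M *v xs"
    by (simp add: M_def matrix_vector_mul_assoc[symmetric] P_def Ptxs)
  have Axs: "A *v xs = 0" using xs_feas by (simp add: A_def)
  define gs where "gs = grad f' xs"
  have gsA: "gs = - (transpose A *v ls)" using KKT by (simp add: gs_def A_def eq_neg_iff_add_eq_0)
  have step: "sqnorm PC (fst (it (Suc k)) - xs) + sqnorm QC (fst (it (Suc k)) - fst (it k))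
            \<le> sqnorm M (fst (it k) - xs) - sqnorm M (fst (it (Suc k)) - xs)
              + (\<alpha> / \<beta>) * ((norm (snd (it k) - ls))\<^sup>2 - (norm (snd (it (Suc k)) - ls))\<^sup>2)" for k
  proof -
    obtain xk lk where itk: "it k = (xk, lk)" by fastforce
    define xk1 where "xk1 = ((\<lambda>z. z - \<alpha> *\<^sub>R grad f' xk - \<alpha> *\<^sub>R (transpose A *v lk) - \<alpha> *\<^sub>R (B *v z)) ^^ T) xk"
    define lk1 where "lk1 = lk + \<beta> *\<^sub>R (A *v xk1)"
    have itS: "it (Suc k) = (xk1, lk1)"
      using itk unfolding it_def by (simp add: xk1_def lk1_def Let_def)
    define g0 where "g0 = grad f' xk"
    define g1 where "g1 = grad f' xk1"
    define hv where "hv = g0 + transpose A *v lk"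
    have x1: "xk1 = P *v xk - \<alpha> *\<^sub>R (C *v hv)"
      unfolding xk1_def iter_closed[OF W'] P_def C_def hv_def g0_def
      by (simp add: sum_matrix_vector)
    have F1: "Ci *v xk1 = M *v xk - \<alpha> *\<^sub>R hv"
      by (simp add: x1 matrix_vector_mult_diff_distrib matrix_vector_mult_scaleR
          matrix_vector_mul_assoc CiC M_def)
    define e where "e = xk1 - xs"
    define d where "d = xk1 - xk"
    define ek where "ek = xk - xs"
    define p where "p = lk - ls"
    define q where "q = lk1 - ls"
    have hv': "hv = (g0 - gs) + transpose A *v p"
      by (simp add: hv_def p_def gsA matrix_vector_mult_diff_distrib)
    have key: "(Ci - M) *v e + M *v d = - (\<alpha> *\<^sub>R (g0 - gs)) - \<alpha> *\<^sub>R (transpose A *v p)"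
    proof -
      have "(Ci - M) *v e + M *v d = Ci *v xk1 - M *v xk"
        by (simp add: e_def d_def matrix_vector_mult_diff_distrib matrix_vector_mult_diff_rdistrib Nxs)
      also have "\<dots> = - (\<alpha> *\<^sub>R hv)" by (simp add: F1)
      finally show ?thesis by (simp add: hv' scaleR_add_right)
    qed
    define S1 where "S1 = e \<bullet> ((Ci - M) *v e)"
    define eMd where "eMd = e \<bullet> (M *v d)"
    define eMe where "eMe = e \<bullet> (M *v e)"
    define dMd where "dMd = d \<bullet> (M *v d)"
    define ekMek where "ekMek = ek \<bullet> (M *v ek)"
    define ee where "ee = e \<bullet> e"
    define dd where "dd = d \<bullet> d"
    define Ae where "Ae = A *v e"
    define AA where "AA = Ae \<bullet> Ae"
    define pp where "pp = p \<bullet> p"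
    define qq where "qq = q \<bullet> q"
    define Ap where "Ap = Ae \<bullet> p"
    define eg where "eg = e \<bullet> (g0 - gs)"
    define eg1 where "eg1 = e \<bullet> (g1 - gs)"
    define eg01 where "eg01 = e \<bullet> (g0 - g1)"
    define GG where "GG = (g0 - g1) \<bullet> (g0 - g1)"
    have eAt: "e \<bullet> (transpose A *v v) = Ae \<bullet> v" for v
      unfolding Ae_def by (metis dot_lmul_matrix inner_commute transpose_matrix_vector)
    have eAt2: "e \<bullet> (v v* A) = Ae \<bullet> v" for v
      using eAt[of v] by simp
    have E1: "S1 + eMd = -\<alpha>*eg - \<alpha>*Ap"
    proof -
      have "e \<bullet> ((Ci - M) *v e + M *v d) = e \<bullet> (- (\<alpha> *\<^sub>R (g0 - gs)) - \<alpha> *\<^sub>R (transpose A *v p))"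
        by (simp only: key)
      then show ?thesis
        by (simp add: S1_def eMd_def eg_def Ap_def inner_add_right inner_diff_right eAt eAt2)
    qed
    have dMe: "d \<bullet> (M *v e) = eMd"
      unfolding eMd_def using sym_inner[OF Msym, of d e] by (simp add: inner_commute)
    have E2: "ekMek = eMe - 2*eMd + dMd"
    proof -
      have "ek = e - d" by (simp add: ek_def e_def d_def)
      then have "ekMek = e \<bullet> (M *v e) - e \<bullet> (M *v d) - d \<bullet> (M *v e) + d \<bullet> (M *v d)"
        by (simp add: ekMek_def matrix_vector_mult_diff_distrib inner_diff_left inner_diff_right)
      then show ?thesis using dMe by (simp add: eMe_def eMd_def dMd_def)
    qed
    have Ae': "Ae = A *v xk1" by (simp add: Ae_def e_def matrix_vector_mult_diff_distrib Axs)
    have qp: "q = p + \<beta> *\<^sub>R Ae" by (simp add: q_def p_def lk1_def Ae')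
    have qq': "qq = pp + 2 * \<beta> * Ap + \<beta>\<^sup>2 * AA"
      by (simp add: qq_def qp pp_def Ap_def AA_def inner_add_left inner_add_right inner_commute
          power2_eq_square algebra_simps)
    have E3: "(\<alpha>/\<beta>)*(pp - qq) = -2*\<alpha>*Ap - \<alpha>*\<beta>*AA"
      using bpos by (simp add: qq' field_simps power2_eq_square)
    have E4: "eg = eg1 + eg01"
      by (simp add: eg_def eg1_def eg01_def inner_diff_right)
    have G1: "m * ee \<le> eg1"
      using grad_bounds(1)[OF deriv2 bounds(3) bounds(4), where u=xk1 and w=xs] bounds(1)
      by (simp add: ee_def eg1_def e_def g1_def gs_def inner_commute)
    have G2: "GG \<le> L\<^sup>2 * dd"
    proof -
      have "GG \<le> L\<^sup>2 * ((xk - xk1) \<bullet> (xk - xk1))"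
        using grad_bounds(2)[OF deriv2 bounds(3) bounds(4), where u=xk and w=xk1] bounds(1)
        by (simp add: GG_def g0_def g1_def)
      moreover have "xk - xk1 = - d" by (simp add: d_def)
      ultimately show ?thesis by (simp add: dd_def)
    qed
    have H1: "\<alpha>*m*ee \<le> \<alpha>*eg1" using G1 apos by (simp add: mult.assoc mult_left_mono)
    have Y: "-2*eg01 \<le> \<eta>4*ee + GG/\<eta>4"
    proof -
      have "0 \<le> (\<eta>4 *\<^sub>R e + (g0 - g1)) \<bullet> (\<eta>4 *\<^sub>R e + (g0 - g1))" by simp
      also have "\<dots> = \<eta>4\<^sup>2 * ee + 2 * \<eta>4 * eg01 + GG"
        by (simp add: ee_def eg01_def GG_def inner_add_left inner_add_right inner_commute
            power2_eq_square algebra_simps)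
      finally have "-2 * \<eta>4 * eg01 \<le> \<eta>4\<^sup>2 * ee + GG" by simp
      then have a1: "(-2 * \<eta>4 * eg01) / \<eta>4 \<le> (\<eta>4\<^sup>2 * ee + GG) / \<eta>4"
        using epos by (intro divide_right_mono) auto
      have a2: "(-2 * \<eta>4 * eg01) / \<eta>4 = -2*eg01" using epos by simp
      have a3: "(\<eta>4\<^sup>2 * ee + GG) / \<eta>4 = \<eta>4*ee + GG/\<eta>4"
        using epos by (simp add: add_divide_distrib power2_eq_square)
      show ?thesis using a1 a2 a3 by linarith
    qed
    have H2: "-2*\<alpha>*eg01 \<le> \<alpha>*\<eta>4*ee + \<alpha>*GG/\<eta>4"
      using mult_left_mono[OF Y, of \<alpha>] apos by (simp add: algebra_simps)
    have H3: "\<alpha>*GG/\<eta>4 \<le> \<alpha>*L\<^sup>2/\<eta>4*dd"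
    proof -
      have "(\<alpha>/\<eta>4) * GG \<le> (\<alpha>/\<eta>4) * (L\<^sup>2 * dd)"
        using G2 apos epos by (intro mult_left_mono) auto
      then show ?thesis by (simp add: algebra_simps)
    qed
    have LHS1: "sqnorm PC e = (2*\<alpha>*m - \<alpha>*\<eta>4)*ee + 2*S1 - \<alpha>*\<beta>*AA"
    proof -
      have "PC *v e = (2*\<alpha>*m - \<alpha>*\<eta>4) *\<^sub>R e + 2 *\<^sub>R ((Ci - M) *v e)
                 - (\<alpha>*\<beta>) *\<^sub>R (transpose A *v Ae)"
        unfolding PC_def N_def I_def Ae_def using apos
        by (simp add: matrix_vector_mult_add_rdistrib matrix_vector_mult_diff_rdistrib
            scaleR_matrix_vector_assoc[symmetric] matrix_vector_mul_assoc[symmetric]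
            scaleR_diff_left)
      then show ?thesis
        by (simp add: sqnorm_def inner_add_right inner_diff_right ee_def S1_def AA_def eAt eAt2)
    qed
    have LHS2: "sqnorm QC d = dMd - \<alpha>*L\<^sup>2/\<eta>4*dd"
      by (simp add: sqnorm_def QC_def I_def matrix_vector_mult_diff_rdistrib
          scaleR_matrix_vector_assoc[symmetric] inner_diff_right dMd_def dd_def)
    have fin: "(2*\<alpha>*m - \<alpha>*\<eta>4)*ee + 2*S1 - \<alpha>*\<beta>*AA + (dMd - \<alpha>*L\<^sup>2/\<eta>4*dd)
               \<le> ekMek - eMe + (\<alpha>/\<beta>)*(pp - qq)"
      using final_arith[OF E1 E2 E3 E4 H1 H2 H3] .
    show ?thesis
      using fin LHS1 LHS2
      by (simp add: itk itS e_def[symmetric] d_def[symmetric] sqnorm_def ekMek_def ek_def eMe_def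
          power2_norm_eq_inner pp_def qq_def p_def q_def)
  qed
  show ?thesis
    unfolding Let_def
    using step
    unfolding A_def[symmetric] I_def[symmetric] W_def[symmetric] C_def[symmetric] Ci_def[symmetric]
      P_def[symmetric] M_def[symmetric] N_def[symmetric] PC_def[symmetric] QC_def[symmetric] it_def[symmetric]
    by blast
qed

end
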